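(* In the mirror triangle method with inexact directional derivatives (see context), for every $u\in\mathbb{R}^n$ and $k\ge0$, with $R_k=\|u_k-u\|_L$ and $M_k=\|\nabla f(y_{k+1})\|_2$, $$A_{k+1}\mathbb{E}_{k+1}f(x_{k+1})-A_kf(x_k)+\mathbb{E}_{k+1}V(u,u_{k+1})-V(u,u_k)\le\alpha_{k+1}f(u)+\frac{A_{k+1}}L\delta^2+A_{k+1}\delta\frac{M_k}{L\sqrt n}+\alpha_{k+1}\delta\frac{\sqrt n}{\sqrt L}R_k.$$
   Context: $\mathbb{E}_{k+1}$ denotes conditional expectation over the randomness of iteration $k+1$ given iterations $1,\dots,k$. $f:\mathbb{R}^n\to\mathbb{R}$ is convex, differentiable, with $\|\nabla f(x)-\nabla f(y)\|_2\le L\|x-y\|_2$. $\|x\|_L^2=L\sum_ix_i^2$, $V(x,y)=\frac12\|x-y\|_L^2$. For each $k\ge0$, $e_{k+1}$ is a random vector on the Euclidean unit sphere such that, conditionally on previous iterations, $\mathbb{E}[e_{k+1}^ie_{k+1}^j]=0$ for $i\ne j$ and $\mathbb{E}[(e_{k+1}^i)^2]=\frac1n$; $\tilde\delta_{k+1}$ is random with $|\tilde\delta_{k+1}|\le\delta$; $\tilde\nabla f(y)=n(\langle\nabla f(y),e_{k+1}\rangle+\tilde\delta_{k+1})e_{k+1}$. Method: $x_0=u_0=y_0$, $\alpha_0=1-\frac1n$, $A_0=\alpha_0$; for $k\ge0$: $\alpha_{k+1}=\frac{k+2n}{2n^2}$, $A_{k+1}=A_k+\alpha_{k+1}$, $y_{k+1}=\frac{\alpha_{k+1}u_k+A_kx_k}{A_{k+1}}$,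 $u_{k+1}=\arg\min_{x\in\mathbb{R}^n}\{V(x,u_k)+\alpha_{k+1}\langle\tilde\nabla f(y_{k+1}),x\rangle\}$, $x_{k+1}=y_{k+1}+n\frac{\alpha_{k+1}}{A_{k+1}}(u_{k+1}-u_k)$. *)

theory Defs
  imports "HOL-Probability.Probability"
begin

fun mtm_alpha :: "nat \<Rightarrow> nat \<Rightarrow> real" where
  "mtm_alpha n 0 = 1 - 1 / real n"
| "mtm_alpha n (Suc k) = (real k + 2 * real n) / (2 * (real n)\<^sup>2)"

definition mtm_A :: "nat \<Rightarrow> nat \<Rightarrow> real" where
  "mtm_A n k = (\<Sum>i\<in>{0..k}. mtm_alpha n i)"

definition normL_sq :: "real \<Rightarrow> real^'n \<Rightarrow> real" where
  "normL_sq L x = L * (\<Sum>i\<in>UNIV. (x $ i)\<^sup>2)"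

definition Vdiv :: "real \<Rightarrow> real^'n \<Rightarrow> real^'n \<Rightarrow> real" where
  "Vdiv L x y = (1/2) * normL_sq L (x - y)"

text \<open>Inexact directional-derivative gradient estimate, with g the gradient of f.\<close>
definition grad_est :: "(real^'n \<Rightarrow> real^'n) \<Rightarrow> real^'n \<Rightarrow> real \<Rightarrow> real^'n \<Rightarrow> real^'n" where
  "grad_est g e d y = (real CARD('n) * (g y \<bullet> e + d)) *\<^sub>R e"

definition mtm_y :: "nat \<Rightarrow> real^'n \<Rightarrow> real^'n \<Rightarrow> real^'n" where
  "mtm_y k x u = (1 / mtm_A CARD('n) (Suc k)) *\<^sub>R
      (mtm_alpha CARD('n) (Suc k) *\<^sub>R u + mtm_A CARD('n) k *\<^sub>R x)"

definition mtm_u_next :: "(real^'n \<Rightarrow> real^'n) \<Rightarrow> real \<Rightarrow> nat \<Rightarrow> real^'n \<Rightarrow> real^'n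
    \<Rightarrow> real^'n \<Rightarrow> real \<Rightarrow> real^'n" where
  "mtm_u_next g L k x u e d =
     arg_min (\<lambda>z. Vdiv L z u + mtm_alpha CARD('n) (Suc k) * (grad_est g e d (mtm_y k x u) \<bullet> z))
             (\<lambda>_. True)"

definition mtm_x_next :: "(real^'n \<Rightarrow> real^'n) \<Rightarrow> real \<Rightarrow> nat \<Rightarrow> real^'n \<Rightarrow> real^'n
    \<Rightarrow> real^'n \<Rightarrow> real \<Rightarrow> real^'n" where
  "mtm_x_next g L k x u e d =
     mtm_y k x u + (real CARD('n) * mtm_alpha CARD('n) (Suc k) / mtm_A CARD('n) (Suc k))
        *\<^sub>R (mtm_u_next g L k x u e d - u)"

text \<open>Iterates (x_k, u_k) for a given realisation of the random directions es (Suc k) = e_{k+1}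
  and errors ds (Suc k) = tilde delta_{k+1}; starting point x_0 = u_0.\<close>
primrec mtm_iter :: "(real^'n \<Rightarrow> real^'n) \<Rightarrow> real \<Rightarrow> real^'n \<Rightarrow> (nat \<Rightarrow> real^'n)
    \<Rightarrow> (nat \<Rightarrow> real) \<Rightarrow> nat \<Rightarrow> (real^'n) \<times> (real^'n)" where
  "mtm_iter g L x0 es ds 0 = (x0, x0)"
| "mtm_iter g L x0 es ds (Suc k) =
     (case mtm_iter g L x0 es ds k of (x, u) \<Rightarrow>
        (mtm_x_next g L k x u (es (Suc k)) (ds (Suc k)),
         mtm_u_next g L k x u (es (Suc k)) (ds (Suc k))))"

end

theory Submission imports Defs begin

lemma line_deriv:
  fixes f :: "real^'n \<Rightarrow> real" and g :: "real^'n \<Rightarrow> real^'n"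
  assumes grad: "\<And>x. (f has_derivative (\<lambda>h. g x \<bullet> h)) (at x)"
  shows "((\<lambda>t. f (y + t *\<^sub>R h)) has_real_derivative (g (y + t *\<^sub>R h) \<bullet> h)) (at t)"
proof -
  have d1: "((\<lambda>t. y + t *\<^sub>R h) has_derivative (\<lambda>s. s *\<^sub>R h)) (at t)"
    by (auto intro!: derivative_eq_intros)
  have "((\<lambda>t. f (y + t *\<^sub>R h)) has_derivative (\<lambda>s. g (y + t *\<^sub>R h) \<bullet> (s *\<^sub>R h))) (at t)"
    using has_derivative_compose[OF d1 grad] by simp
  moreover have "(\<lambda>s. g (y + t *\<^sub>R h) \<bullet> (s *\<^sub>R h)) = (*) (g (y + t *\<^sub>R h) \<bullet> h)"
    by (auto simp: mult.commute)
  ultimately show ?thesis by (simp add: has_field_derivative_def)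
qed

lemma descent:
  fixes f :: "real^'n \<Rightarrow> real" and g :: "real^'n \<Rightarrow> real^'n"
  assumes grad: "\<And>x. (f has_derivative (\<lambda>h. g x \<bullet> h)) (at x)"
    and lip: "\<And>x y. norm (g x - g y) \<le> L * norm (x - y)"
  shows "f x \<le> f y + g y \<bullet> (x - y) + L / 2 * (norm (x - y))\<^sup>2"
proof -
  define h where "h = x - y"
  define \<phi> where "\<phi> t = f (y + t *\<^sub>R h) - t * (g y \<bullet> h) - L / 2 * t^2 * (norm h)\<^sup>2" for t
  have "\<phi> 0 \<ge> \<phi> 1"
  proof (rule DERIV_nonpos_imp_nonincreasing[of 0 1])
    fix t :: real assume t: "0 \<le> t" "t \<le> 1"
    have "DERIV \<phi> t :> g (y + t *\<^sub>R h) \<bullet> h - g y \<bullet> h - L / 2 * (2 * t) * (norm h)\<^sup>2"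
      unfolding \<phi>_def
      by (auto intro!: derivative_eq_intros line_deriv[OF grad])
    moreover have "g (y + t *\<^sub>R h) \<bullet> h - g y \<bullet> h - L / 2 * (2 * t) * (norm h)\<^sup>2 \<le> 0"
    proof -
      have "g (y + t *\<^sub>R h) \<bullet> h - g y \<bullet> h = (g (y + t *\<^sub>R h) - g y) \<bullet> h"
        by (simp add: inner_diff_left)
      also have "\<dots> \<le> norm (g (y + t *\<^sub>R h) - g y) * norm h"
        by (rule norm_cauchy_schwarz)
      also have "\<dots> \<le> (L * norm (t *\<^sub>R h)) * norm h"
        using lip[of "y + t *\<^sub>R h" y] by (intro mult_right_mono) auto
      also have "\<dots> = L * t * (norm h)\<^sup>2" using t by (simp add: power2_eq_square)
      finally show ?thesis by simp
    qed
    ultimately show "\<exists>d. DERIV \<phi> t :> d \<and> d \<le> 0" by blast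
  qed simp
  then show ?thesis unfolding \<phi>_def h_def by simp
qed

lemma tangent:
  fixes f :: "real^'n \<Rightarrow> real" and g :: "real^'n \<Rightarrow> real^'n"
  assumes convex: "convex_on UNIV f"
    and grad: "\<And>x. (f has_derivative (\<lambda>h. g x \<bullet> h)) (at x)"
  shows "f y + g y \<bullet> (x - y) \<le> f x"
proof -
  define h where "h = x - y"
  define \<phi> where "\<phi> t = f (y + t *\<^sub>R h)" for t
  have cvx: "convex_on UNIV \<phi>"
  proof (rule convex_onI)
    fix t a b :: real assume "0 < t" "t < 1"
    have "y + ((1 - t) *\<^sub>R a + t *\<^sub>R b) *\<^sub>R h = (1 - t) *\<^sub>R (y + a *\<^sub>R h) + t *\<^sub>R (y + b *\<^sub>R h)"
      by (simp add: algebra_simps)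
    then show "\<phi> ((1 - t) *\<^sub>R a + t *\<^sub>R b) \<le> (1 - t) * \<phi> a + t * \<phi> b"
      unfolding \<phi>_def using convex_onD[OF convex, of t] \<open>0 < t\<close> \<open>t < 1\<close> by simp
  qed simp
  have "\<phi> 1 - \<phi> 0 \<ge> (g y \<bullet> h) * (1 - 0)"
    by (rule convex_on_imp_above_tangent[OF cvx]) (use line_deriv[OF grad, of y h 0] in \<open>auto simp: \<phi>_def[abs_def]\<close>)
  then show ?thesis unfolding \<phi>_def h_def by simp
qed

lemma normL_sq_eq: "normL_sq L x = L * (norm x)\<^sup>2"
proof -
  have "(norm x)\<^sup>2 = x \<bullet> x" by (rule power2_norm_eq_inner)
  then show ?thesis by (simp add: normL_sq_def inner_vec_def power2_eq_square)
qed

lemma quad_argmin: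
  fixes u G :: "real^'n"
  assumes L: "L > 0"
  shows "arg_min (\<lambda>z. Vdiv L z u + c * (G \<bullet> z)) (\<lambda>_. True) = u - (c / L) *\<^sub>R G"
proof -
  define zs where "zs = u - (c / L) *\<^sub>R G"
  define F where "F z = Vdiv L z u + c * (G \<bullet> z)" for z
  have key: "F z = F zs + L / 2 * (norm (z - zs))\<^sup>2" for z
  proof -
    define w where "w = z - zs"
    have zu: "z - u = w - (c / L) *\<^sub>R G" unfolding zs_def w_def by simp
    have n1: "(norm (z - u))\<^sup>2 = (norm w)\<^sup>2 - 2 * (c / L) * (w \<bullet> G) + (c / L)\<^sup>2 * (norm G)\<^sup>2"
      unfolding zu power2_norm_eq_inner
      by (simp add: inner_diff_left inner_diff_right inner_commute power2_eq_square algebra_simps)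
    have n2: "(norm (zs - u))\<^sup>2 = (c / L)\<^sup>2 * (norm G)\<^sup>2"
      unfolding zs_def by (simp add: power_mult_distrib power_divide)
    have gz: "G \<bullet> z = G \<bullet> w + G \<bullet> zs" unfolding w_def by (simp add: inner_diff_right)
    show ?thesis
      unfolding F_def Vdiv_def normL_sq_eq n1 n2 gz w_def[symmetric] using L
      by (simp add: field_simps power2_eq_square inner_commute)
  qed
  show ?thesis
    unfolding F_def[symmetric] zs_def[symmetric]
  proof (rule arg_minI[where x = zs])
    fix y
    have "0 \<le> L / 2 * (norm (y - zs))\<^sup>2" using L by simp
    then show "\<not> F y < F zs" using key[of y] by linarith
  next
    fix x assume "\<forall>y. True \<longrightarrow> \<not> F y < F x"
    then have "\<not> F zs < F x" by blast
    then have "L / 2 * (norm (x - zs))\<^sup>2 \<le> 0" using key[of x] by linarith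
    then have "(norm (x - zs))\<^sup>2 \<le> 0" using L
      by (simp add: mult_le_0_iff)
    then show "x = zs" by simp
  qed simp
qed

lemma integ_cont:
  fixes M :: "((real^'n) \<times> real) measure" and \<phi> :: "(real^'n) \<times> real \<Rightarrow> real"
  assumes prob: "prob_space M" and sets_M: "sets M = sets borel"
    and supp: "AE p in M. norm (fst p) = 1 \<and> \<bar>snd p\<bar> \<le> \<delta>"
    and cont: "continuous_on UNIV \<phi>"
  shows "integrable M \<phi>"
proof -
  interpret prob_space M by (rule prob)
  have meas: "\<phi> \<in> borel_measurable M"
  proof -
    have "measurable M borel = measurable borel (borel :: real measure)"
      by (rule measurable_cong_sets[OF sets_M refl])
    then show ?thesis using borel_measurable_continuous_onI[OF cont] by simp
  qed
  have "compact (\<phi> ` cball 0 (1 + \<bar>\<delta>\<bar>))"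
    by (rule compact_continuous_image[OF continuous_on_subset[OF cont] compact_cball]) simp
  then obtain B where B: "\<And>p. p \<in> cball 0 (1 + \<bar>\<delta>\<bar>) \<Longrightarrow> norm (\<phi> p) \<le> B"
    using compact_imp_bounded bounded_iff by (metis image_eqI)
  have "AE p in M. norm (\<phi> p) \<le> B"
    using supp
  proof eventually_elim
    case (elim p)
    have "norm p \<le> norm (fst p) + norm (snd p)"
      using norm_Pair_le[of "fst p" "snd p"] by simp
    then have "p \<in> cball 0 (1 + \<bar>\<delta>\<bar>)" using elim by auto
    then show ?case by (rule B)
  qed
  then show ?thesis using integrable_const_bound meas by blast
qed

lemma exp_inner:
  fixes M :: "((real^'n) \<times> real) measure" and a b :: "real^'n"
  assumes prob: "prob_space M" and sets_M: "sets M = sets borel"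
    and supp: "AE p in M. norm (fst p) = 1 \<and> \<bar>snd p\<bar> \<le> \<delta>"
    and cross: "\<And>i j. i \<noteq> j \<Longrightarrow> (\<integral>p. (fst p $ i) * (fst p $ j) \<partial>M) = 0"
    and diag: "\<And>i. (\<integral>p. (fst p $ i)\<^sup>2 \<partial>M) = 1 / real CARD('n)"
  shows "(\<integral>p. (a \<bullet> fst p) * (b \<bullet> fst p) \<partial>M) = (a \<bullet> b) / real CARD('n)"
proof -
  have int: "integrable M (\<lambda>p. fst p $ i * fst p $ j)" for i j
    by (rule integ_cont[OF prob sets_M supp]) (auto intro!: continuous_intros)
  have E: "(\<integral>p. fst p $ i * fst p $ j \<partial>M) = (if i = j then 1 / real CARD('n) else 0)" for i j
    using cross[of i j] diag[of i] by (auto simp: power2_eq_square)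
  have eq: "(a \<bullet> fst p) * (b \<bullet> fst p) = (\<Sum>i\<in>UNIV. \<Sum>j\<in>UNIV. (a $ i * b $ j) * (fst p $ i * fst p $ j))" for p
    by (simp add: inner_vec_def sum_product algebra_simps)
  have "(\<integral>p. (a \<bullet> fst p) * (b \<bullet> fst p) \<partial>M)
        = (\<Sum>i\<in>UNIV. \<Sum>j\<in>UNIV. (a $ i * b $ j) * (\<integral>p. fst p $ i * fst p $ j \<partial>M))"
    unfolding eq
    by (simp add: int)
  also have "\<dots> = (\<Sum>i\<in>UNIV. (a $ i * b $ i) / real CARD('n))"
    unfolding E by (simp add: if_distrib sum.delta cong: if_cong)
  also have "\<dots> = (a \<bullet> b) / real CARD('n)"
    by (simp add: inner_vec_def sum_divide_distrib)
  finally show ?thesis .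
qed

lemma exp_abs:
  fixes M :: "((real^'n) \<times> real) measure" and b :: "real^'n"
  assumes prob: "prob_space M" and sets_M: "sets M = sets borel"
    and supp: "AE p in M. norm (fst p) = 1 \<and> \<bar>snd p\<bar> \<le> \<delta>"
    and cross: "\<And>i j. i \<noteq> j \<Longrightarrow> (\<integral>p. (fst p $ i) * (fst p $ j) \<partial>M) = 0"
    and diag: "\<And>i. (\<integral>p. (fst p $ i)\<^sup>2 \<partial>M) = 1 / real CARD('n)"
  shows "(\<integral>p. \<bar>b \<bullet> fst p\<bar> \<partial>M) \<le> norm b / sqrt (real CARD('n))"
proof -
  interpret prob_space M by (rule prob)
  define X where "X p = \<bar>b \<bullet> fst p\<bar>" for p :: "(real^'n) \<times> real"
  define c where "c = (\<integral>p. X p \<partial>M)"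
  have intX: "integrable M X" unfolding X_def
    by (rule integ_cont[OF prob sets_M supp]) (auto intro!: continuous_intros)
  have intX2: "integrable M (\<lambda>p. (b \<bullet> fst p) * (b \<bullet> fst p))"
    by (rule integ_cont[OF prob sets_M supp]) (auto intro!: continuous_intros)
  have EX2: "(\<integral>p. (b \<bullet> fst p) * (b \<bullet> fst p) \<partial>M) = (norm b)\<^sup>2 / real CARD('n)"
    using exp_inner[OF prob sets_M supp cross diag, of b b] by (simp add: power2_norm_eq_inner)
  have sq: "(X p - c)\<^sup>2 = (b \<bullet> fst p) * (b \<bullet> fst p) - 2 * c * X p + c\<^sup>2" for p
    unfolding X_def by (simp add: power2_eq_square algebra_simps)
  have "0 \<le> (\<integral>p. (X p - c)\<^sup>2 \<partial>M)" by simp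
  also have "\<dots> = (norm b)\<^sup>2 / real CARD('n) - 2 * c * c + c\<^sup>2"
    unfolding sq using intX intX2
    by (simp add: EX2 c_def[symmetric] prob_space)
  finally have "c\<^sup>2 \<le> (norm b)\<^sup>2 / real CARD('n)" by (simp add: power2_eq_square)
  then have "sqrt (c\<^sup>2) \<le> sqrt ((norm b)\<^sup>2 / real CARD('n))" by (rule real_sqrt_le_mono)
  then have "c \<le> norm b / sqrt (real CARD('n))"
    by (simp add: real_sqrt_divide)
  then show ?thesis unfolding c_def X_def .
qed

lemma A_Suc: "mtm_A n (Suc k) = mtm_A n k + mtm_alpha n (Suc k)"
  by (simp add: mtm_A_def)

lemma A_closed:
  assumes "n \<ge> 1"
  shows "mtm_A n m = 1 - 1 / real n + (2 * real n * real m + real m * (real m - 1) / 2) / (2 * (real n)\<^sup>2)"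
proof (induction m)
  case 0 then show ?case by (simp add: mtm_A_def)
next
  case (Suc m)
  have "real n > 0" using assms by simp
  then show ?case unfolding A_Suc Suc.IH by (simp add: field_simps power2_eq_square)
qed

lemma A_nonneg: assumes "n \<ge> 1" shows "mtm_A n k \<ge> 0"
proof -
  have "mtm_alpha n i \<ge> 0" for i
    using assms by (cases i) (auto simp: field_simps)
  then show ?thesis unfolding mtm_A_def by (simp add: sum_nonneg)
qed

lemma alpha_pos: assumes "n \<ge> 1" shows "mtm_alpha n (Suc k) > 0"
  using assms by simp

lemma q_le_A:
  assumes "n \<ge> 1"
  shows "(real n)\<^sup>2 * (mtm_alpha n (Suc k))\<^sup>2 \<le> mtm_A n (Suc k)"
proof -
  have N: "real n > 0" using assms by simp
  have "mtm_A n (Suc k) - (real n)\<^sup>2 * (mtm_alpha n (Suc k))\<^sup>2 = real k / (4 * (real n)\<^sup>2)"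
    unfolding A_closed[OF assms] using N by (simp add: field_simps power2_eq_square)
  moreover have "real k / (4 * (real n)\<^sup>2) \<ge> 0" by simp
  ultimately show ?thesis by linarith
qed

lemma pointwise:
  fixes f :: "real^'n \<Rightarrow> real" and g :: "real^'n \<Rightarrow> real^'n"
    and y uk u e :: "real^'n"
  assumes grad: "\<And>x. (f has_derivative (\<lambda>h. g x \<bullet> h)) (at x)"
    and lip: "\<And>x y. norm (g x - g y) \<le> L * norm (x - y)"
    and Lpos: "L > 0" and N: "N \<ge> 0" and al: "\<alpha> \<ge> 0" and Apos: "A > 0"
    and qA: "N\<^sup>2 * \<alpha>\<^sup>2 \<le> A"
    and e1: "norm e = 1" and dd: "\<bar>d\<bar> \<le> \<delta>"
  shows "A * f (y + (N * \<alpha> / A) *\<^sub>R ((uk - (\<alpha> / L) *\<^sub>R ((N * (g y \<bullet> e + d)) *\<^sub>R e)) - uk))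
         + Vdiv L u (uk - (\<alpha> / L) *\<^sub>R ((N * (g y \<bullet> e + d)) *\<^sub>R e))
       \<le> A * f y + Vdiv L u uk + \<alpha> * N * (g y \<bullet> e) * ((u - uk) \<bullet> e)
         + \<alpha> * N * \<delta> * \<bar>(u - uk) \<bullet> e\<bar> + A / L * \<delta> * \<bar>g y \<bullet> e\<bar> + A / L * \<delta>\<^sup>2"
proof -
  define a where "a = g y \<bullet> e"
  define s where "s = a + d"
  define v where "v = u - uk"
  define q where "q = N\<^sup>2 * \<alpha>\<^sup>2"
  define c where "c = q * s / (A * L)"
  have ee: "e \<bullet> e = 1" using e1 by (simp add: power2_norm_eq_inner[symmetric])
  have xe: "y + (N * \<alpha> / A) *\<^sub>R ((uk - (\<alpha> / L) *\<^sub>R ((N * (g y \<bullet> e + d)) *\<^sub>R e)) - uk) = y - c *\<^sub>R e"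
  proof -
    have "y + (N * \<alpha> / A) *\<^sub>R ((uk - (\<alpha> / L) *\<^sub>R ((N * (g y \<bullet> e + d)) *\<^sub>R e)) - uk)
        = y - ((N * \<alpha> / A) * ((\<alpha> / L) * (N * (g y \<bullet> e + d)))) *\<^sub>R e"
      by (simp add: algebra_simps)
    also have "(N * \<alpha> / A) * ((\<alpha> / L) * (N * (g y \<bullet> e + d))) = c"
      unfolding c_def q_def s_def a_def using Apos Lpos by (simp add: power2_eq_square field_simps)
    finally show ?thesis .
  qed
  have ue: "u - (uk - (\<alpha> / L) *\<^sub>R ((N * (g y \<bullet> e + d)) *\<^sub>R e)) = v + (\<alpha> * N * s / L) *\<^sub>R e"
  proof -
    have sc: "(\<alpha> / L) * (N * (g y \<bullet> e + d)) = \<alpha> * N * s / L" unfolding s_def a_def by simp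
    show ?thesis unfolding scaleR_scaleR sc v_def by (simp add: algebra_simps)
  qed
  have desc: "f (y - c *\<^sub>R e) \<le> f y - c * a + L / 2 * c\<^sup>2"
    using descent[OF grad lip, of "y - c *\<^sub>R e" y] e1 unfolding a_def
    by (simp add: power_mult_distrib)
  have V1: "Vdiv L u (uk - (\<alpha> / L) *\<^sub>R ((N * (g y \<bullet> e + d)) *\<^sub>R e))
      = Vdiv L u uk + \<alpha> * N * s * (v \<bullet> e) + \<alpha>\<^sup>2 * N\<^sup>2 * s\<^sup>2 / (2 * L)"
  proof -
    have "(norm (v + (\<alpha> * N * s / L) *\<^sub>R e))\<^sup>2 = (norm v)\<^sup>2 + 2 * (\<alpha> * N * s / L) * (v \<bullet> e) + (\<alpha> * N * s / L)\<^sup>2"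
      unfolding power2_norm_eq_inner using ee
      by (simp add: inner_add_left inner_add_right inner_commute power2_eq_square algebra_simps)
    then show ?thesis
      unfolding Vdiv_def normL_sq_eq ue v_def[symmetric] using Lpos
      by (simp add: field_simps power2_eq_square)
  qed
  define r where "r = q / A"
  have q0: "q \<ge> 0" unfolding q_def by simp
  have r0: "0 \<le> r" and r1: "r \<le> 1" unfolding r_def q_def using qA Apos by auto
  have qr: "q = r * A" unfolding r_def using Apos by simp
  have d0: "\<delta> \<ge> 0" using dd by linarith
  have T: "a\<^sup>2 * (r * A * (r - 1) / 2) + a * d * (r\<^sup>2 * A) + d\<^sup>2 * (A * (r\<^sup>2 + r) / 2)
        \<le> A * \<delta> * \<bar>a\<bar> + A * \<delta>\<^sup>2"
  proof -
    have "r * A \<ge> 0" using r0 Apos by simp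
    then have "r * A * (r - 1) \<le> 0" using r1 by (intro mult_nonneg_nonpos) auto
    then have t1: "a\<^sup>2 * (r * A * (r - 1) / 2) \<le> 0"
      by (intro mult_nonneg_nonpos) auto
    have "a * d \<le> \<bar>a\<bar> * \<bar>d\<bar>" by (metis abs_ge_self abs_mult)
    also have "\<dots> \<le> \<bar>a\<bar> * \<delta>" using dd by (intro mult_left_mono) auto
    finally have "a * d \<le> \<bar>a\<bar> * \<delta>" .
    moreover have "r\<^sup>2 * A \<le> A" using r0 r1 Apos by (simp add: power_le_one)
    moreover have "r\<^sup>2 * A \<ge> 0" using Apos by simp
    ultimately have t2: "a * d * (r\<^sup>2 * A) \<le> A * \<delta> * \<bar>a\<bar>"
    proof -
      assume h1: "a * d \<le> \<bar>a\<bar> * \<delta>" and h2: "r\<^sup>2 * A \<le> A" and h3: "r\<^sup>2 * A \<ge> 0"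
      have "a * d * (r\<^sup>2 * A) \<le> (\<bar>a\<bar> * \<delta>) * (r\<^sup>2 * A)" by (rule mult_right_mono[OF h1 h3])
      also have "\<dots> \<le> (\<bar>a\<bar> * \<delta>) * A" by (rule mult_left_mono[OF h2]) (use d0 in simp)
      finally show ?thesis by (simp add: mult_ac)
    qed
    have "\<bar>d\<bar> \<le> \<bar>\<delta>\<bar>" using dd d0 by simp
    then have "d\<^sup>2 \<le> \<delta>\<^sup>2" by (simp add: abs_le_square_iff)
    moreover have "A * (r\<^sup>2 + r) / 2 \<le> A"
    proof -
      have "r\<^sup>2 \<le> 1" using r0 r1 by (simp add: power_le_one)
      then have "(r\<^sup>2 + r) / 2 \<le> 1" using r1 by simp
      then have "A * ((r\<^sup>2 + r) / 2) \<le> A * 1" using Apos by (intro mult_left_mono) auto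
      then show ?thesis by simp
    qed
    moreover have "A * (r\<^sup>2 + r) / 2 \<ge> 0" using r0 Apos by simp
    ultimately have t3: "d\<^sup>2 * (A * (r\<^sup>2 + r) / 2) \<le> A * \<delta>\<^sup>2"
    proof -
      assume h1: "d\<^sup>2 \<le> \<delta>\<^sup>2" and h2: "A * (r\<^sup>2 + r) / 2 \<le> A" and h3: "A * (r\<^sup>2 + r) / 2 \<ge> 0"
      have "d\<^sup>2 * (A * (r\<^sup>2 + r) / 2) \<le> \<delta>\<^sup>2 * (A * (r\<^sup>2 + r) / 2)" by (rule mult_right_mono[OF h1 h3])
      also have "\<dots> \<le> \<delta>\<^sup>2 * A" by (rule mult_left_mono[OF h2]) simp
      finally show ?thesis by (simp add: mult_ac)
    qed
    show ?thesis using t1 t2 t3 by linarith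
  qed
  have ve: "\<alpha> * N * d * (v \<bullet> e) \<le> \<alpha> * N * \<delta> * \<bar>v \<bullet> e\<bar>"
  proof -
    have "d * (v \<bullet> e) \<le> \<bar>d\<bar> * \<bar>v \<bullet> e\<bar>" by (metis abs_ge_self abs_mult)
    also have "\<dots> \<le> \<delta> * \<bar>v \<bullet> e\<bar>" using dd by (intro mult_right_mono) auto
    finally have "d * (v \<bullet> e) \<le> \<delta> * \<bar>v \<bullet> e\<bar>" .
    then show ?thesis using al N by (simp add: mult_left_mono mult.assoc)
  qed
  have main: "A * (- c * a + L / 2 * c\<^sup>2) + \<alpha> * N * s * (v \<bullet> e) + \<alpha>\<^sup>2 * N\<^sup>2 * s\<^sup>2 / (2 * L)
      = \<alpha> * N * a * (v \<bullet> e) + \<alpha> * N * d * (v \<bullet> e)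
        + (a\<^sup>2 * (r * A * (r - 1) / 2) + a * d * (r\<^sup>2 * A) + d\<^sup>2 * (A * (r\<^sup>2 + r) / 2)) / L"
    unfolding c_def s_def r_def q_def using Apos Lpos
    by (simp add: field_simps power2_eq_square)
  have "A * f (y - c *\<^sub>R e) \<le> A * (f y - c * a + L / 2 * c\<^sup>2)"
    using desc Apos by simp
  also have "\<dots> = A * f y + A * (- c * a + L / 2 * c\<^sup>2)" by (simp add: algebra_simps)
  finally have D: "A * f (y - c *\<^sub>R e) \<le> A * f y + A * (- c * a + L / 2 * c\<^sup>2)" .
  have B: "(a\<^sup>2 * (r * A * (r - 1) / 2) + a * d * (r\<^sup>2 * A) + d\<^sup>2 * (A * (r\<^sup>2 + r) / 2)) / L
      \<le> A / L * \<delta> * \<bar>a\<bar> + A / L * \<delta>\<^sup>2"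
  proof -
    have "(a\<^sup>2 * (r * A * (r - 1) / 2) + a * d * (r\<^sup>2 * A) + d\<^sup>2 * (A * (r\<^sup>2 + r) / 2)) / L
      \<le> (A * \<delta> * \<bar>a\<bar> + A * \<delta>\<^sup>2) / L"
      using T Lpos by (simp add: divide_right_mono)
    also have "\<dots> = A / L * \<delta> * \<bar>a\<bar> + A / L * \<delta>\<^sup>2" by (simp add: add_divide_distrib)
    finally show ?thesis .
  qed
  have eq: "A * f (y + (N * \<alpha> / A) *\<^sub>R ((uk - (\<alpha> / L) *\<^sub>R ((N * (g y \<bullet> e + d)) *\<^sub>R e)) - uk))
         + Vdiv L u (uk - (\<alpha> / L) *\<^sub>R ((N * (g y \<bullet> e + d)) *\<^sub>R e))
      = A * f (y - c *\<^sub>R e) + (Vdiv L u uk + \<alpha> * N * s * (v \<bullet> e) + \<alpha>\<^sup>2 * N\<^sup>2 * s\<^sup>2 / (2 * L))"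
    by (simp only: xe V1)
  show ?thesis
    unfolding eq unfolding a_def[symmetric] v_def[symmetric] using D main B ve by linarith
qed

theorem lemma14:
  fixes f :: "real^'n \<Rightarrow> real" and g :: "real^'n \<Rightarrow> real^'n"
    and L \<delta> :: real and x0 u :: "real^'n"
    and es :: "nat \<Rightarrow> real^'n" and ds :: "nat \<Rightarrow> real"
    and M :: "((real^'n) \<times> real) measure" and k :: nat
  assumes convex: "convex_on UNIV f"
    and grad: "\<And>x. (f has_derivative (\<lambda>h. g x \<bullet> h)) (at x)"
    and lip: "\<And>x y. norm (g x - g y) \<le> L * norm (x - y)"
    and Lpos: "L > 0"
    and past: "\<And>i. 1 \<le> i \<Longrightarrow> i \<le> k \<Longrightarrow> norm (es i) = 1 \<and> \<bar>ds i\<bar> \<le> \<delta>"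
    and prob: "prob_space M"
    and sets_M: "sets M = sets borel"
    and supp: "AE p in M. norm (fst p) = 1 \<and> \<bar>snd p\<bar> \<le> \<delta>"
    and cross: "\<And>i j. i \<noteq> j \<Longrightarrow> (\<integral>p. (fst p $ i) * (fst p $ j) \<partial>M) = 0"
    and diag: "\<And>i. (\<integral>p. (fst p $ i)\<^sup>2 \<partial>M) = 1 / real CARD('n)"
  shows
    "(let n = CARD('n);
          xk = fst (mtm_iter g L x0 es ds k);
          uk = snd (mtm_iter g L x0 es ds k);
          yk1 = mtm_y k xk uk;
          Rk = sqrt (normL_sq L (uk - u));
          Mk = norm (g yk1)
      in mtm_A n (Suc k) * (\<integral>p. f (mtm_x_next g L k xk uk (fst p) (snd p)) \<partial>M)
         - mtm_A n k * f xk
         + (\<integral>p. Vdiv L u (mtm_u_next g L k xk uk (fst p) (snd p)) \<partial>M)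
         - Vdiv L u uk
       \<le> mtm_alpha n (Suc k) * f u + mtm_A n (Suc k) / L * \<delta>\<^sup>2
          + mtm_A n (Suc k) * \<delta> * Mk / (L * sqrt (real n))
          + mtm_alpha n (Suc k) * \<delta> * sqrt (real n) / sqrt L * Rk)"
proof -
  define n where "n = CARD('n)"
  define N where "N = real n"
  define xk where "xk = fst (mtm_iter g L x0 es ds k)"
  define uk where "uk = snd (mtm_iter g L x0 es ds k)"
  define y where "y = mtm_y k xk uk"
  define \<alpha> where "\<alpha> = mtm_alpha n (Suc k)"
  define A where "A = mtm_A n (Suc k)"
  define Ak where "Ak = mtm_A n k"
  define v where "v = u - uk"
  define gy where "gy = g y"
  have n1: "n \<ge> 1" unfolding n_def using zero_less_card_finite[where 'a='n] by linarith
  have Npos: "N > 0" unfolding N_def using n1 by simp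
  have al: "\<alpha> > 0" unfolding \<alpha>_def using alpha_pos[OF n1] .
  have Ak0: "Ak \<ge> 0" unfolding Ak_def using A_nonneg[OF n1] .
  have AAk: "A = Ak + \<alpha>" unfolding A_def Ak_def \<alpha>_def by (rule A_Suc)
  have Apos: "A > 0" using AAk Ak0 al by linarith
  have qA: "N\<^sup>2 * \<alpha>\<^sup>2 \<le> A" unfolding N_def \<alpha>_def A_def using q_le_A[OF n1] .
  interpret P: prob_space M by (rule prob)
  have d0: "\<delta> \<ge> 0"
  proof (rule ccontr)
    assume "\<not> \<delta> \<ge> 0"
    have "AE p in M. False" using supp
    proof eventually_elim
      case (elim p) then show ?case using \<open>\<not> \<delta> \<ge> 0\<close> by linarith
    qed
    then show False by simp
  qed
  define U where "U p = uk - (\<alpha> / L) *\<^sub>R ((N * (gy \<bullet> fst p + snd p)) *\<^sub>R fst p)" for p :: "(real^'n) \<times> real"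
  define X where "X p = y + (N * \<alpha> / A) *\<^sub>R (U p - uk)" for p :: "(real^'n) \<times> real"
  have U_eq: "mtm_u_next g L k xk uk (fst p) (snd p) = U p" for p
    unfolding mtm_u_next_def U_def
    by (subst quad_argmin[OF Lpos]) (simp add: grad_est_def y_def gy_def \<alpha>_def n_def N_def)
  have X_eq: "mtm_x_next g L k xk uk (fst p) (snd p) = X p" for p
    unfolding mtm_x_next_def X_def U_eq by (simp add: y_def \<alpha>_def A_def n_def N_def)
  have cf: "continuous_on UNIV f"
    using grad has_derivative_continuous continuous_at_imp_continuous_on by blast
  have cU: "continuous_on UNIV U" unfolding U_def by (intro continuous_intros)
  have cX: "continuous_on UNIV X" unfolding X_def using cU by (intro continuous_intros)
  have cfX: "continuous_on UNIV (\<lambda>p. f (X p))"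
    by (rule continuous_on_compose2[OF cf cX]) auto
  have cV: "continuous_on UNIV (\<lambda>p. Vdiv L u (U p))"
    unfolding Vdiv_def normL_sq_def using cU by (intro continuous_intros)
  note IC = integ_cont[OF prob sets_M supp]
  have i1: "integrable M (\<lambda>p. f (X p))" by (rule IC[OF cfX])
  have i2: "integrable M (\<lambda>p. Vdiv L u (U p))" by (rule IC[OF cV])
  have i3: "integrable M (\<lambda>p. (gy \<bullet> fst p) * (v \<bullet> fst p))" by (rule IC) (intro continuous_intros)
  have i4: "integrable M (\<lambda>p. \<bar>v \<bullet> fst p\<bar>)" by (rule IC) (intro continuous_intros)
  have i5: "integrable M (\<lambda>p. \<bar>gy \<bullet> fst p\<bar>)" by (rule IC) (intro continuous_intros)
  define \<Psi> where "\<Psi> p = A * f y + Vdiv L u uk + \<alpha> * N * ((gy \<bullet> fst p) * (v \<bullet> fst p))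
         + \<alpha> * N * \<delta> * \<bar>v \<bullet> fst p\<bar> + A / L * \<delta> * \<bar>gy \<bullet> fst p\<bar> + A / L * \<delta>\<^sup>2"
    for p :: "(real^'n) \<times> real"
  have AEb: "AE p in M. A * f (X p) + Vdiv L u (U p) \<le> \<Psi> p"
    using supp
  proof eventually_elim
    case (elim p)
    show ?case
      using pointwise[OF grad lip Lpos _ _ Apos qA, of "fst p" "snd p" \<delta> y uk u] elim Npos al
      unfolding X_def U_def \<Psi>_def gy_def v_def by (simp add: mult.assoc)
  qed
  have iPsi: "integrable M \<Psi>" unfolding \<Psi>_def using i3 i4 i5 by simp
  have "(\<integral>p. A * f (X p) + Vdiv L u (U p) \<partial>M) \<le> (\<integral>p. \<Psi> p \<partial>M)"
    by (rule integral_mono_AE[OF _ iPsi AEb]) (use i1 i2 in simp)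
  also have "(\<integral>p. \<Psi> p \<partial>M) = A * f y + Vdiv L u uk + \<alpha> * N * (\<integral>p. (gy \<bullet> fst p) * (v \<bullet> fst p) \<partial>M)
         + \<alpha> * N * \<delta> * (\<integral>p. \<bar>v \<bullet> fst p\<bar> \<partial>M) + A / L * \<delta> * (\<integral>p. \<bar>gy \<bullet> fst p\<bar> \<partial>M) + A / L * \<delta>\<^sup>2"
    unfolding \<Psi>_def using i3 i4 i5 by (simp add: P.prob_space)
  also have "(\<integral>p. (gy \<bullet> fst p) * (v \<bullet> fst p) \<partial>M) = (gy \<bullet> v) / N"
    unfolding N_def n_def by (rule exp_inner[OF prob sets_M supp cross diag])
  finally have I1: "(\<integral>p. A * f (X p) + Vdiv L u (U p) \<partial>M) \<le> A * f y + Vdiv L u uk + \<alpha> * (gy \<bullet> v)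
         + \<alpha> * N * \<delta> * (\<integral>p. \<bar>v \<bullet> fst p\<bar> \<partial>M) + A / L * \<delta> * (\<integral>p. \<bar>gy \<bullet> fst p\<bar> \<partial>M) + A / L * \<delta>\<^sup>2"
    using Npos by simp
  have E1: "\<alpha> * N * \<delta> * (\<integral>p. \<bar>v \<bullet> fst p\<bar> \<partial>M) \<le> \<alpha> * \<delta> * sqrt N * norm v"
  proof -
    have "\<alpha> * N * \<delta> * (\<integral>p. \<bar>v \<bullet> fst p\<bar> \<partial>M) \<le> \<alpha> * N * \<delta> * (norm v / sqrt N)"
      using exp_abs[OF prob sets_M supp cross diag, of v] al Npos d0
      unfolding N_def n_def by (intro mult_left_mono) auto
    also have "\<dots> = \<alpha> * \<delta> * sqrt N * norm v"
      using Npos by (simp add: field_simps real_sqrt_mult[symmetric])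
    finally show ?thesis .
  qed
  have E2: "A / L * \<delta> * (\<integral>p. \<bar>gy \<bullet> fst p\<bar> \<partial>M) \<le> A * \<delta> * norm gy / (L * sqrt N)"
  proof -
    have "A / L * \<delta> * (\<integral>p. \<bar>gy \<bullet> fst p\<bar> \<partial>M) \<le> A / L * \<delta> * (norm gy / sqrt N)"
      using exp_abs[OF prob sets_M supp cross diag, of gy] Apos Lpos d0
      unfolding N_def n_def by (intro mult_left_mono) auto
    also have "\<dots> = A * \<delta> * norm gy / (L * sqrt N)" by simp
    finally show ?thesis .
  qed
  have C: "A * f y \<le> Ak * f xk + \<alpha> * f u - \<alpha> * (gy \<bullet> v)"
  proof -
    have t1: "f y + gy \<bullet> (xk - y) \<le> f xk" unfolding gy_def by (rule tangent[OF convex grad])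
    have t2: "f y + gy \<bullet> (u - y) \<le> f u" unfolding gy_def by (rule tangent[OF convex grad])
    have "Ak * (f y + gy \<bullet> (xk - y)) + \<alpha> * (f y + gy \<bullet> (u - y)) \<le> Ak * f xk + \<alpha> * f u"
      using t1 t2 Ak0 al by (intro add_mono mult_left_mono) auto
    moreover have "A *\<^sub>R y = \<alpha> *\<^sub>R uk + Ak *\<^sub>R xk"
      unfolding y_def mtm_y_def \<alpha>_def A_def Ak_def n_def using Apos by (simp add: A_def n_def)
    then have "Ak *\<^sub>R (xk - y) + \<alpha> *\<^sub>R (u - y) = \<alpha> *\<^sub>R v"
      unfolding v_def using AAk by (simp add: algebra_simps)
    then have "Ak * (gy \<bullet> (xk - y)) + \<alpha> * (gy \<bullet> (u - y)) = \<alpha> * (gy \<bullet> v)"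
      by (metis inner_add_right inner_scaleR_right)
    ultimately show ?thesis using AAk by (simp add: algebra_simps)
  qed
  have R: "sqrt (normL_sq L (uk - u)) = sqrt L * norm v"
    unfolding normL_sq_eq v_def using Lpos by (simp add: real_sqrt_mult norm_minus_commute)
  have main: "A * (\<integral>p. f (X p) \<partial>M) + (\<integral>p. Vdiv L u (U p) \<partial>M)
      = (\<integral>p. A * f (X p) + Vdiv L u (U p) \<partial>M)" using i1 i2 by simp
  have fin: "\<alpha> * \<delta> * sqrt N / sqrt L * (sqrt L * norm v) = \<alpha> * \<delta> * sqrt N * norm v"
    using Lpos by simp
  show ?thesis
    unfolding Let_def xk_def[symmetric] uk_def[symmetric] y_def[symmetric] n_def[symmetric]
      \<alpha>_def[symmetric] A_def[symmetric] Ak_def[symmetric] X_eq U_eq R N_def[symmetric] gy_def[symmetric] fin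
    using I1 E1 E2 C main by linarith
qed

end
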